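(* Let $K\subseteq\mathbb{R}^d$ be closed and convex with non-empty interior and let $\alpha\in\mathbb{R}^d$. The function $g_{K,\alpha}:\mathbb{R}^d\to[0,\infty)$, $g_{K,\alpha}(x):=\exp(-\alpha^\top x)\mathbf{1}_{\{x\in K\}}$, is integrable if and only if $K$ is line-free and $\alpha\in\operatorname{Int}(\operatorname{rec}(K)^* )$. Consequently, the class $\mathcal{F}^1$ of log-1-affine densities in $\mathcal{F}_d$ is \[ \mathcal{F}^1=\bigl\{c_{K,\alpha}^{-1}g_{K,\alpha}: K\text{ closed convex with non-empty interior, }K\text{ line-free},\ \alpha\in\operatorname{Int}(\operatorname{rec}(K)^* )\bigr\}, \] where $c_{K,\alpha}:=\int_K\exp(-\alpha^\top x)\,dx$.
   Context: $\mathcal{F}_d$ is the class of upper semi-continuous log-concave densities on $\mathbb{R}^d$; a density $f$ is log-1-affine if $\operatorname{supp} f=\{f\ne0\}$ is closed and $\log f$ is affine on it. $K$ is line-free if it contains no line. $\operatorname{rec}(K):=\{u:K+u\subseteq K\}$ and $C^*:=\{\alpha:\alpha^\top x\ge0\ \forall x\in C\}$. *)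

theory Defs
  imports "HOL-Analysis.Analysis"
begin

definition usc :: "('a::topological_space \<Rightarrow> real) \<Rightarrow> bool" where
  "usc f \<longleftrightarrow> (\<forall>t. open {x. f x < t})"

definition is_density :: "('a::euclidean_space \<Rightarrow> real) \<Rightarrow> bool" where
  "is_density f \<longleftrightarrow> (\<forall>x. 0 \<le> f x) \<and> integrable lborel f \<and> integral\<^sup>L lborel f = 1"

definition log_concave :: "('a::real_vector \<Rightarrow> real) \<Rightarrow> bool" where
  "log_concave f \<longleftrightarrow> (\<forall>x. 0 \<le> f x) \<and>
     (\<forall>x y t. 0 < t \<and> t < 1 \<longrightarrow>
        f x powr (1 - t) * f y powr t \<le> f ((1 - t) *\<^sub>R x + t *\<^sub>R y))"

definition F_d :: "('a::euclidean_space \<Rightarrow> real) set" where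
  "F_d = {f. is_density f \<and> log_concave f \<and> usc f}"

definition supp :: "('a \<Rightarrow> real) \<Rightarrow> 'a set" where
  "supp f = {x. f x \<noteq> 0}"

definition log_1_affine :: "('a::real_inner \<Rightarrow> real) \<Rightarrow> bool" where
  "log_1_affine f \<longleftrightarrow> closed (supp f) \<and>
     (\<exists>a b. \<forall>x\<in>supp f. ln (f x) = a \<bullet> x + b)"

definition line_free :: "'a::real_vector set \<Rightarrow> bool" where
  "line_free K \<longleftrightarrow> \<not> (\<exists>x u. u \<noteq> 0 \<and> (\<forall>t::real. x + t *\<^sub>R u \<in> K))"

definition rec_cone :: "'a::real_vector set \<Rightarrow> 'a set" where
  "rec_cone K = {u. (\<lambda>x. x + u) ` K \<subseteq> K}"

definition dual_cone :: "'a::real_inner set \<Rightarrow> 'a set" where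
  "dual_cone C = {\<alpha>. \<forall>x\<in>C. 0 \<le> \<alpha> \<bullet> x}"

definition g_fun :: "'a::euclidean_space set \<Rightarrow> 'a \<Rightarrow> 'a \<Rightarrow> real" where
  "g_fun K \<alpha> x = exp (- (\<alpha> \<bullet> x)) * indicator K x"

definition c_const :: "'a::euclidean_space set \<Rightarrow> 'a \<Rightarrow> real" where
  "c_const K \<alpha> = integral\<^sup>L lborel (g_fun K \<alpha>)"

end

theory Submission
  imports Defs
begin


lemma rec_ray:
  fixes K :: "'a::euclidean_space set"
  assumes cl: "closed K" and cv: "convex K" and x0: "x0 \<in> K" and ray: "\<And>t. t \<ge> 0 \<Longrightarrow> x0 + t *\<^sub>R u \<in> K"
  shows "u \<in> rec_cone K"
proof -
  { fix y assume y: "y \<in> K"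
    define z where "z = (\<lambda>n::nat. y + u + inverse (real (Suc n)) *\<^sub>R (x0 - y))"
    have zK: "z n \<in> K" for n
    proof -
      have ab: "inverse (real (Suc n)) * real (Suc n) = 1" by simp
      have "(1 - inverse (real (Suc n))) *\<^sub>R y + inverse (real (Suc n)) *\<^sub>R (x0 + real (Suc n) *\<^sub>R u)
         = y + inverse (real (Suc n)) *\<^sub>R (x0 - y) + (inverse (real (Suc n)) * real (Suc n)) *\<^sub>R u"
        by (simp add: algebra_simps)
      also have "\<dots> = z n" unfolding z_def ab by simp
      finally have "z n = (1 - inverse (real (Suc n))) *\<^sub>R y + inverse (real (Suc n)) *\<^sub>R (x0 + real (Suc n) *\<^sub>R u)" by simp
      moreover have "(1 - inverse (real (Suc n))) *\<^sub>R y + inverse (real (Suc n)) *\<^sub>R (x0 + real (Suc n) *\<^sub>R u) \<in> K"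
        by (rule convexD[OF cv y ray]) (auto simp: field_simps)
      ultimately show ?thesis by simp
    qed
    have "z \<longlonglongrightarrow> y + u + 0 *\<^sub>R (x0 - y)"
      unfolding z_def by (intro tendsto_intros LIMSEQ_inverse_real_of_nat)
    then have "z \<longlonglongrightarrow> y + u" by simp
    then have "y + u \<in> K" using closed_sequentially[OF cl, of z] zK by blast
  }
  then show ?thesis by (auto simp: rec_cone_def)
qed

lemma rec_iter:
  fixes K :: "'a::euclidean_space set"
  assumes cv: "convex K" and u: "u \<in> rec_cone K" and x: "x \<in> K" and t: "t \<ge> 0"
  shows "x + t *\<^sub>R u \<in> K"
proof -
  have nat: "x + real n *\<^sub>R u \<in> K" for n
  proof (induction n)
    case 0 then show ?case using x by simp
  next
    case (Suc n)
    then have "(x + real n *\<^sub>R u) + u \<in> K" using u by (auto simp: rec_cone_def)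
    then show ?case by (simp add: algebra_simps)
  qed
  obtain n :: nat where n0: "t < real n" by (meson reals_Archimedean2)
  then have n: "t \<le> real n" "real n > 0" using t by auto
  have "(1 - t / real n) *\<^sub>R x + (t / real n) *\<^sub>R (x + real n *\<^sub>R u) \<in> K"
    by (rule convexD[OF cv x nat]) (use n t in auto)
  moreover have "(1 - t / real n) *\<^sub>R x + (t / real n) *\<^sub>R (x + real n *\<^sub>R u) = x + t *\<^sub>R u"
    using n by (simp add: algebra_simps)
  ultimately show ?thesis by simp
qed

lemma rec_closed:
  fixes K :: "'a::euclidean_space set"
  assumes "closed K"
  shows "closed (rec_cone K)"
proof -
  have e: "u \<in> (\<lambda>y. y - x) ` K \<longleftrightarrow> x + u \<in> K" for u x
  proof
    assume "x + u \<in> K" then show "u \<in> (\<lambda>y. y - x) ` K" by (rule rev_image_eqI) simp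
  qed auto
  have "rec_cone K = (\<Inter>x\<in>K. (\<lambda>y. y - x) ` K)"
  proof -
    have r: "u \<in> rec_cone K \<longleftrightarrow> (\<forall>x\<in>K. x + u \<in> K)" for u
      by (auto simp: rec_cone_def image_subset_iff)
    show ?thesis by (auto simp only: r e INT_iff)
  qed
  moreover have "closed ((\<lambda>y. y - x) ` K)" for x
    using closed_translation[OF assms, of "-x"] by (simp add: image_def)
  ultimately show ?thesis by auto
qed



lemma nonint_dir:
  fixes K :: "'a::euclidean_space set"
  assumes cl: "closed K" and cv: "convex K" and int: "interior K \<noteq> {}"
    and u: "u \<in> rec_cone K" and u0: "u \<noteq> 0" and au: "\<alpha> \<bullet> u \<le> 0"
  shows "\<not> integrable lborel (g_fun K \<alpha>)"
proof
  assume ig: "integrable lborel (g_fun K \<alpha>)"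
  obtain x0 where "x0 \<in> interior K" using int by blast
  then obtain r where r: "r > 0" "ball x0 r \<subseteq> K" using mem_interior by blast
  define v where "v = (2 * r / norm u) *\<^sub>R u"
  have nv: "norm v = 2 * r" using r u0 by (simp add: v_def)
  have av: "\<alpha> \<bullet> v \<le> 0" using r au u0 by (auto simp: v_def intro!: divide_nonpos_pos mult_nonneg_nonpos)
  define B where "B k = ball (x0 + real k *\<^sub>R v) r" for k :: nat
  have BK: "B k \<subseteq> K" for k
  proof
    fix y assume "y \<in> B k"
    then have "y - real k *\<^sub>R v \<in> ball x0 r" by (simp add: B_def dist_norm algebra_simps)
    then have "y - real k *\<^sub>R v \<in> K" using r by blast
    from rec_iter[OF cv u this, of "real k * (2 * r / norm u)"] r
    show "y \<in> K" by (simp add: v_def)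
  qed
  define m where "m = exp (- (\<alpha> \<bullet> x0) - norm \<alpha> * r)"
  have m0: "m > 0" by (simp add: m_def)
  have gB: "m \<le> g_fun K \<alpha> y" if "y \<in> B k" for y k
  proof -
    have yK: "y \<in> K" using BK that by blast
    have d: "norm (y - x0 - real k *\<^sub>R v) < r" using that unfolding B_def mem_ball dist_norm
      by (metis norm_minus_commute diff_diff_eq)
    have "\<alpha> \<bullet> (y - x0 - real k *\<^sub>R v) \<le> norm \<alpha> * norm (y - x0 - real k *\<^sub>R v)"
      by (rule norm_cauchy_schwarz)
    also have "\<dots> \<le> norm \<alpha> * r" using d by (simp add: mult_left_mono)
    finally have "\<alpha> \<bullet> y \<le> \<alpha> \<bullet> x0 + norm \<alpha> * r + real k * (\<alpha> \<bullet> v)"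
      by (simp add: inner_diff_right algebra_simps)
    moreover have "real k * (\<alpha> \<bullet> v) \<le> 0" using av by (simp add: mult_nonneg_nonpos)
    ultimately have "\<alpha> \<bullet> y \<le> \<alpha> \<bullet> x0 + norm \<alpha> * r" by linarith
    then show ?thesis using yK by (simp add: g_fun_def m_def)
  qed
  have disj: "disjoint_family_on B A" for A :: "nat set"
    unfolding disjoint_family_on_def
  proof (intro ballI impI)
    fix j k :: nat assume "j \<in> A" "k \<in> A" and jk: "j \<noteq> k"
    show "B j \<inter> B k = {}"
    proof (rule ccontr)
      assume "B j \<inter> B k \<noteq> {}"
      then obtain y where "y \<in> B j" "y \<in> B k" by blast
      then have "dist (x0 + real j *\<^sub>R v) (x0 + real k *\<^sub>R v) < r + r"
        unfolding B_def by (meson dist_triangle_less_add mem_ball dist_commute)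
      moreover have "dist (x0 + real j *\<^sub>R v) (x0 + real k *\<^sub>R v) = \<bar>real j - real k\<bar> * (2 * r)"
        by (simp add: dist_norm nv flip: scaleR_diff_left)
      moreover have "\<bar>real j - real k\<bar> \<ge> 1" using jk by linarith
      moreover have "1 * (2 * r) \<le> \<bar>real j - real k\<bar> * (2 * r)"
        by (rule mult_right_mono) (use \<open>\<bar>real j - real k\<bar> \<ge> 1\<close> r in auto)
      ultimately show False by linarith
    qed
  qed
  define V where "V = measure lborel (ball (0::'a) r)"
  have V0: "V > 0" using r by (simp add: V_def)
  have bound: "m * (real N * V) \<le> integral\<^sup>L lborel (g_fun K \<alpha>)" for N
  proof -
    define U where "U = (\<Union>k\<in>{..<N}. B k)"
    have Ufin: "emeasure lborel U < \<infinity>"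
      by (rule emeasure_bounded_finite) (auto simp: U_def B_def)
    have Us: "U \<in> sets lborel" by (auto simp: U_def B_def)
    have "measure lborel U = (\<Sum>k\<in>{..<N}. measure lborel (B k))"
      unfolding U_def
    proof (rule measure_finite_Union)
      show "disjoint_family_on B {..<N}" by (rule disj)
      fix k show "emeasure lborel (B k) \<noteq> \<infinity>"
        using emeasure_bounded_finite[of "B k"] by (simp add: B_def)
    qed (auto simp: B_def)
    also have "\<dots> = real N * V" using r by (simp add: B_def V_def content_ball[OF less_imp_le[OF r(1)]])
    finally have mU: "measure lborel U = real N * V" .
    have "integral\<^sup>L lborel (\<lambda>y. m * indicator U y) \<le> integral\<^sup>L lborel (g_fun K \<alpha>)"
    proof (rule integral_mono)
      show "integrable lborel (\<lambda>y. m * indicator U y)" using Ufin Us by simp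
      show "integrable lborel (g_fun K \<alpha>)" by fact
      fix y
      show "m * indicator U y \<le> g_fun K \<alpha> y"
      proof (cases "y \<in> U")
        case True then show ?thesis using gB by (auto simp: U_def)
      next
        case False then show ?thesis by (simp add: g_fun_def)
      qed
    qed
    then show ?thesis using mU by simp
  qed
  obtain N :: nat where "integral\<^sup>L lborel (g_fun K \<alpha>) / (m * V) < real N"
    using reals_Archimedean2 by blast
  then have "integral\<^sup>L lborel (g_fun K \<alpha>) < m * (real N * V)"
    using m0 V0 by (simp add: field_simps)
  with bound[of N] show False by simp
qed



lemma pow_le_fact_exp:
  fixes y :: real
  assumes "y \<ge> 0"
  shows "y ^ k \<le> fact k * exp y"
proof -
  have "(\<Sum>n\<in>{k}. y^n /\<^sub>R fact n) \<le> (\<Sum>n. y^n /\<^sub>R fact n)"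
    by (rule sum_le_suminf[OF summable_exp_generic]) (use assms in auto)
  then have "y ^ k / fact k \<le> exp y" by (simp add: exp_def divide_inverse ac_simps)
  then show ?thesis by (simp add: field_simps)
qed

lemma summable_poly_exp:
  fixes c V :: real
  assumes c: "c > 0" and V: "V \<ge> 0"
  shows "summable (\<lambda>n::nat. exp (- c * real n) * (V * (real n + 1) ^ d))"
proof (rule summable_comparison_test')
  define q where "q = exp (- c / 2)"
  have q: "norm q < 1" using c by (simp add: q_def)
  define M where "M = V * fact d * (2 / c) ^ d * exp (c / 2)"
  show "summable (\<lambda>n. M * q ^ n)" using q by (intro summable_mult summable_geometric)
  fix n :: nat
  have y: "(c / 2 * (real n + 1)) ^ d \<le> fact d * exp (c / 2 * (real n + 1))"
    by (rule pow_le_fact_exp) (use c in simp)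
  have "(real n + 1) ^ d = (2 / c) ^ d * (c / 2 * (real n + 1)) ^ d"
  proof -
    have e: "(2 / c) * (c / 2 * (real n + 1)) = real n + 1" using c by (simp add: field_simps)
    show ?thesis by (metis e power_mult_distrib)
  qed
  also have "\<dots> \<le> (2 / c) ^ d * (fact d * exp (c / 2 * (real n + 1)))"
    using y c by (intro mult_left_mono) auto
  finally have p: "(real n + 1) ^ d \<le> (2 / c) ^ d * (fact d * exp (c / 2 * (real n + 1)))" .
  have qn: "q ^ n = exp (- c / 2 * real n)" by (simp add: q_def exp_of_nat_mult[symmetric] mult.commute)
  have "norm (exp (- c * real n) * (V * (real n + 1) ^ d)) = exp (- c * real n) * (V * (real n + 1) ^ d)"
    using V by simp
  also have "\<dots> \<le> exp (- c * real n) * (V * ((2 / c) ^ d * (fact d * exp (c / 2 * (real n + 1)))))"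
    using p V by (intro mult_left_mono) auto
  also have "\<dots> = M * (exp (- c * real n) * exp (c / 2 * (real n + 1)) * exp (- c / 2))"
    by (simp add: M_def q_def exp_minus field_simps)
  also have "exp (- c * real n) * exp (c / 2 * (real n + 1)) * exp (- c / 2) = q ^ n"
    unfolding qn by (simp add: exp_add[symmetric] field_simps)
  finally show "norm (exp (- c * real n) * (V * (real n + 1) ^ d)) \<le> M * q ^ n" .
qed

lemma integrable_exp_norm:
  fixes c :: real
  assumes c: "c > 0"
  shows "integrable lborel (\<lambda>x::'a::euclidean_space. exp (- c * norm x))"
proof (rule integrableI_bounded)
  show "(\<lambda>x::'a. exp (- c * norm x)) \<in> borel_measurable lborel" by measurable
  define V where "V = unit_ball_vol (real DIM('a))"
  have V: "V \<ge> 0" by (simp add: V_def)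
  define F where "F n x = ennreal (exp (- c * real n)) * indicator (cball (0::'a) (real n + 1)) x" for n x
  have le: "ennreal (norm (exp (- c * norm x))) \<le> (\<Sum>n. F n x)" for x :: 'a
  proof -
    define n where "n = nat \<lfloor>norm x\<rfloor>"
    have n1: "real n \<le> norm x" "norm x \<le> real n + 1" unfolding n_def
      by (simp_all add: of_nat_nat)
    have "ennreal (norm (exp (- c * norm x))) \<le> F n x"
      using n1 c by (auto simp: F_def mem_cball dist_norm intro!: ennreal_leI mult_left_mono)
    also have "F n x = (\<Sum>i\<in>{n}. F i x)" by simp
    also have "\<dots> \<le> (\<Sum>i. F i x)" by (rule sum_le_suminf) auto
    finally show ?thesis .
  qed
  have "(\<integral>\<^sup>+ x. ennreal (norm (exp (- c * norm (x::'a)))) \<partial>lborel) \<le> (\<integral>\<^sup>+ x. (\<Sum>n. F n x) \<partial>lborel)"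
    by (rule nn_integral_mono) (rule le)
  also have "\<dots> = (\<Sum>n. \<integral>\<^sup>+ x. F n x \<partial>lborel)"
    by (rule nn_integral_suminf) (unfold F_def, intro borel_measurable_times_ennreal borel_measurable_indicator borel_measurable_const, simp)
  also have "\<dots> = (\<Sum>n. ennreal (exp (- c * real n) * (V * (real n + 1) ^ DIM('a))))"
  proof (rule suminf_cong)
    fix n
    have "(\<integral>\<^sup>+ x. F n x \<partial>lborel) = ennreal (exp (- c * real n)) * emeasure lborel (cball (0::'a) (real n + 1))"
      unfolding F_def by (rule nn_integral_cmult_indicator) simp
    also have "\<dots> = ennreal (exp (- c * real n)) * ennreal (V * (real n + 1) ^ DIM('a))"
      by (subst emeasure_cball) (simp_all add: V_def)
    also have "\<dots> = ennreal (exp (- c * real n) * (V * (real n + 1) ^ DIM('a)))"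
      using V by (simp add: ennreal_mult)
    finally show "(\<integral>\<^sup>+ x. F n x \<partial>lborel) = ennreal (exp (- c * real n) * (V * (real n + 1) ^ DIM('a)))" .
  qed
  also have "\<dots> = ennreal (\<Sum>n. exp (- c * real n) * (V * (real n + 1) ^ DIM('a)))"
    by (rule suminf_ennreal2) (use V summable_poly_exp[OF c V] in auto)
  also have "\<dots> < \<infinity>" by simp
  finally show "(\<integral>\<^sup>+ x. ennreal (norm (exp (- c * norm (x::'a)))) \<partial>lborel) < \<infinity>" .
qed



lemma lin_growth:
  fixes K :: "'a::euclidean_space set"
  assumes cl: "closed K" and cv: "convex K" and a: "\<alpha> \<in> interior (dual_cone (rec_cone K))"
  shows "\<exists>\<epsilon>>0. \<exists>C. \<forall>x\<in>K. \<epsilon> * norm x - C \<le> \<alpha> \<bullet> x"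
proof -
  obtain e where e: "e > 0" "ball \<alpha> e \<subseteq> dual_cone (rec_cone K)" using a mem_interior by blast
  have pos: "e / 2 \<le> \<alpha> \<bullet> u" if u: "u \<in> rec_cone K" "norm u = 1" for u
  proof -
    have "\<alpha> - (e / 2) *\<^sub>R u \<in> ball \<alpha> e" using e u by (simp add: dist_norm)
    then have "\<alpha> - (e / 2) *\<^sub>R u \<in> dual_cone (rec_cone K)" using e by blast
    then have "0 \<le> (\<alpha> - (e / 2) *\<^sub>R u) \<bullet> u" using u unfolding dual_cone_def by blast
    also have "\<dots> = \<alpha> \<bullet> u - e / 2" using u by (simp add: inner_diff_left dot_square_norm)
    finally show ?thesis by simp
  qed
  define \<epsilon> where "\<epsilon> = e / 4"
  have \<epsilon>: "\<epsilon> > 0" using e by (simp add: \<epsilon>_def)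
  show ?thesis
  proof (rule ccontr)
    assume "\<not> ?thesis"
    then have "\<forall>n::nat. \<exists>x\<in>K. \<alpha> \<bullet> x < \<epsilon> * norm x - real n" using \<epsilon>
      by (metis not_le)
    then obtain X where X: "\<And>n. X n \<in> K" "\<And>n. \<alpha> \<bullet> X n < \<epsilon> * norm (X n) - real n" by metis
    define Y where "Y n = X (Suc n)" for n
    define L where "L = \<epsilon> + norm \<alpha>"
    have L: "L > 0" using \<epsilon> norm_ge_zero[of \<alpha>] unfolding L_def by linarith
    have YK: "Y n \<in> K" for n using X by (simp add: Y_def)
    have Ybig: "real (Suc n) \<le> L * norm (Y n)" for n
    proof -
      have "- (norm \<alpha> * norm (Y n)) \<le> \<alpha> \<bullet> Y n"
        using norm_cauchy_schwarz[of "-\<alpha>" "Y n"] by simp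
      then show ?thesis using X(2)[of "Suc n"] by (simp add: Y_def L_def algebra_simps)
    qed
    have Ypos: "norm (Y n) > 0" for n
    proof -
      have "0 < L * norm (Y n)" using Ybig[of n] of_nat_0_less_iff[of "Suc n", where 'a=real] by linarith
      then show ?thesis using L by (simp add: zero_less_mult_iff)
    qed
    define W where "W n = Y n /\<^sub>R norm (Y n)" for n
    have Wn: "norm (W n) = 1" for n using Ypos[of n] by (simp add: W_def)
    have aW: "\<alpha> \<bullet> W n \<le> \<epsilon>" for n
    proof -
      have "\<alpha> \<bullet> Y n < \<epsilon> * norm (Y n)" using X(2)[of "Suc n"] by (simp add: Y_def)
      then show ?thesis using Ypos[of n] by (simp add: W_def field_simps)
    qed
    have sc: "seq_compact (sphere (0::'a) 1)" by (rule compact_imp_seq_compact) simp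
    have Ws: "\<forall>n. W n \<in> sphere 0 1" using Wn by simp
    obtain u r where u: "u \<in> sphere 0 1" and r: "strict_mono r" and Wr: "(W \<circ> r) \<longlonglongrightarrow> u"
      using seq_compactE[OF sc Ws] by blast
    have nu: "norm u = 1" using u by simp
    have "(\<lambda>n. \<alpha> \<bullet> (W \<circ> r) n) \<longlonglongrightarrow> \<alpha> \<bullet> u" by (intro tendsto_intros Wr)
    then have au: "\<alpha> \<bullet> u \<le> \<epsilon>" by (rule LIMSEQ_le_const2) (auto simp: aW)
    define x0 where "x0 = Y 0"
    have x0: "x0 \<in> K" by (simp add: x0_def YK)
    have "u \<in> rec_cone K"
    proof (rule rec_ray[OF cl cv x0])
      fix t :: real assume t: "t \<ge> 0"
      define s where "s n = t / norm (Y (r n))" for n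
      have s0: "s n \<ge> 0" for n using t Ypos by (simp add: s_def)
      have sle: "s n \<le> (t * L) * inverse (real (Suc n))" for n
      proof -
        have "real (Suc n) \<le> real (Suc (r n))" using seq_suble[OF r, of n] by simp
        also have "\<dots> \<le> L * norm (Y (r n))" by (rule Ybig)
        finally have "real (Suc n) \<le> L * norm (Y (r n))" .
        then have "t * real (Suc n) \<le> t * (L * norm (Y (r n)))" using t by (rule mult_left_mono)
        then have "t + t * real n \<le> L * (t * norm (Y (r n)))" by (simp add: algebra_simps)
        then show ?thesis using t L Ypos[of "r n"]
          by (simp add: s_def field_simps)
      qed
      have "(\<lambda>n. (t * L) * inverse (real (Suc n))) \<longlonglongrightarrow> (t * L) * 0"
        by (intro tendsto_intros LIMSEQ_inverse_real_of_nat)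
      then have slim: "s \<longlonglongrightarrow> 0"
        by (intro tendsto_sandwich[of "\<lambda>_. 0" s _ "\<lambda>n. (t * L) * inverse (real (Suc n))"])
           (auto simp: s0 sle[simplified])
      define z where "z n = x0 + s n *\<^sub>R (Y (r n) - x0)" for n
      have zeq: "z n = x0 - s n *\<^sub>R x0 + t *\<^sub>R (W \<circ> r) n" for n
        using Ypos[of "r n"] by (simp add: z_def s_def W_def algebra_simps divide_inverse)
      have "z \<longlonglongrightarrow> x0 - 0 *\<^sub>R x0 + t *\<^sub>R u"
        unfolding zeq by (intro tendsto_intros slim Wr)
      then have zlim: "z \<longlonglongrightarrow> x0 + t *\<^sub>R u" by simp
      have "eventually (\<lambda>n. s n < 1) sequentially"
        using slim by (rule order_tendstoD) simp
      then have "eventually (\<lambda>n. z n \<in> K) sequentially"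
      proof (rule eventually_mono)
        fix n assume "s n < 1"
        then have "(1 - s n) *\<^sub>R x0 + s n *\<^sub>R Y (r n) \<in> K"
          using s0[of n] by (intro convexD[OF cv x0 YK]) auto
        moreover have "(1 - s n) *\<^sub>R x0 + s n *\<^sub>R Y (r n) = z n"
          by (simp add: z_def algebra_simps)
        ultimately show "z n \<in> K" by simp
      qed
      then show "x0 + t *\<^sub>R u \<in> K"
        by (rule Lim_in_closed_set[OF cl _ _ zlim]) simp
    qed
    then have "e / 2 \<le> \<alpha> \<bullet> u" using pos nu by blast
    with au e show False by (simp add: \<epsilon>_def)
  qed
qed



lemma g_meas:
  fixes K :: "'a::euclidean_space set"
  assumes "closed K"
  shows "g_fun K \<alpha> \<in> borel_measurable lborel"
proof -
  have [measurable]: "K \<in> sets borel" using assms by simp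
  show ?thesis unfolding g_fun_def by measurable
qed

lemma part1:
  fixes K :: "'a::euclidean_space set"
  assumes cl: "closed K" and cv: "convex K" and int: "interior K \<noteq> {}"
  shows "integrable lborel (g_fun K \<alpha>) \<longleftrightarrow> line_free K \<and> \<alpha> \<in> interior (dual_cone (rec_cone K))"
proof
  assume ig: "integrable lborel (g_fun K \<alpha>)"
  have posdir: "0 < \<alpha> \<bullet> u" if "u \<in> rec_cone K" "u \<noteq> 0" for u
    using nonint_dir[OF cl cv int that] ig by force
  show "line_free K \<and> \<alpha> \<in> interior (dual_cone (rec_cone K))"
  proof
    show "line_free K"
      unfolding line_free_def
    proof
      assume "\<exists>x u. u \<noteq> 0 \<and> (\<forall>t. x + t *\<^sub>R u \<in> K)"
      then obtain x u where u: "u \<noteq> 0" "\<And>t. x + t *\<^sub>R u \<in> K" by blast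
      have xK: "x \<in> K" using u(2)[of 0] by simp
      have "u \<in> rec_cone K" by (rule rec_ray[OF cl cv xK]) (use u in auto)
      moreover have "- u \<in> rec_cone K"
      proof (rule rec_ray[OF cl cv xK])
        fix t :: real show "x + t *\<^sub>R - u \<in> K" using u(2)[of "- t"] by simp
      qed
      ultimately have "0 < \<alpha> \<bullet> u" "0 < \<alpha> \<bullet> (- u)" using posdir[of u] posdir[of "- u"] u(1) by auto
      then show False by simp
    qed
    define S where "S = rec_cone K \<inter> sphere 0 1"
    have cS: "compact S" unfolding S_def by (intro closed_Int_compact rec_closed cl compact_sphere)
    obtain m where m: "m > 0" "\<And>w. w \<in> S \<Longrightarrow> m \<le> \<alpha> \<bullet> w"
    proof (cases "S = {}")
      case True then show ?thesis using that[of 1] by auto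
    next
      case False
      obtain w0 where w0: "w0 \<in> S" "\<And>w. w \<in> S \<Longrightarrow> \<alpha> \<bullet> w0 \<le> \<alpha> \<bullet> w"
      proof -
        have "continuous_on S (\<lambda>w. \<alpha> \<bullet> w)" by (intro continuous_intros)
        then show ?thesis using continuous_attains_inf[OF cS False, of "\<lambda>w. \<alpha> \<bullet> w"] that by blast
      qed
      have "w0 \<in> rec_cone K" "w0 \<noteq> 0" using w0(1) by (auto simp: S_def)
      then have "0 < \<alpha> \<bullet> w0" by (rule posdir)
      then show ?thesis using that w0 by blast
    qed
    have "ball \<alpha> m \<subseteq> dual_cone (rec_cone K)"
    proof
      fix \<beta> assume b: "\<beta> \<in> ball \<alpha> m"
      show "\<beta> \<in> dual_cone (rec_cone K)"
        unfolding dual_cone_def mem_Collect_eq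
      proof
        fix u assume u: "u \<in> rec_cone K"
        show "0 \<le> \<beta> \<bullet> u"
        proof (cases "u = 0")
          case True then show ?thesis by simp
        next
          case False
          define w where "w = u /\<^sub>R norm u"
          have wr: "w \<in> rec_cone K"
            using rec_iter[OF cv u _, of _ "inverse (norm u)"] by (auto simp: rec_cone_def w_def)
          have "w \<in> S" using wr False by (simp add: S_def w_def)
          then have "m \<le> \<alpha> \<bullet> w" by (rule m(2))
          moreover have "(\<alpha> - \<beta>) \<bullet> w \<le> norm (\<alpha> - \<beta>) * norm w" by (rule norm_cauchy_schwarz)
          moreover have "norm w = 1" using False by (simp add: w_def)
          moreover have "norm (\<alpha> - \<beta>) < m" using b by (simp add: dist_norm)
          ultimately have "0 \<le> \<beta> \<bullet> w" by (simp add: inner_diff_left)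
          then show ?thesis using False by (simp add: w_def zero_le_mult_iff)
        qed
      qed
    qed
    then show "\<alpha> \<in> interior (dual_cone (rec_cone K))" using m(1) mem_interior by blast
  qed
next
  assume "line_free K \<and> \<alpha> \<in> interior (dual_cone (rec_cone K))"
  then obtain \<epsilon> C where e: "\<epsilon> > 0" "\<And>x. x \<in> K \<Longrightarrow> \<epsilon> * norm x - C \<le> \<alpha> \<bullet> x"
    using lin_growth[OF cl cv] by blast
  show "integrable lborel (g_fun K \<alpha>)"
  proof (rule Bochner_Integration.integrable_bound)
    show "integrable lborel (\<lambda>x::'a. exp C * exp (- \<epsilon> * norm x))"
      using integrable_exp_norm[OF e(1)] by simp
    show "g_fun K \<alpha> \<in> borel_measurable lborel" by (rule g_meas[OF cl])
    show "AE x in lborel. norm (g_fun K \<alpha> x) \<le> norm (exp C * exp (- \<epsilon> * norm x))"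
    proof (rule AE_I2)
      fix x :: 'a
      show "norm (g_fun K \<alpha> x) \<le> norm (exp C * exp (- \<epsilon> * norm x))"
      proof (cases "x \<in> K")
        case True
        then have "- (\<alpha> \<bullet> x) \<le> C + - \<epsilon> * norm x" using e(2)[of x] by simp
        then have "exp (- (\<alpha> \<bullet> x)) \<le> exp (C + - \<epsilon> * norm x)" by simp
        also have "exp (C + - \<epsilon> * norm x) = exp C * exp (- \<epsilon> * norm x)" by (rule exp_add)
        finally show ?thesis using True by (simp add: g_fun_def)
      qed (simp add: g_fun_def)
    qed
  qed
qed



lemma c_pos:
  fixes K :: "'a::euclidean_space set"
  assumes cl: "closed K" and int: "interior K \<noteq> {}" and ig: "integrable lborel (g_fun K \<alpha>)"
  shows "c_const K \<alpha> > 0"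
proof -
  obtain x0 where "x0 \<in> interior K" using int by blast
  then obtain r where r: "r > 0" "ball x0 r \<subseteq> K" using mem_interior by blast
  define m where "m = exp (- (\<alpha> \<bullet> x0) - norm \<alpha> * r)"
  have m0: "m > 0" by (simp add: m_def)
  have le: "m * indicator (ball x0 r) y \<le> g_fun K \<alpha> y" for y
  proof (cases "y \<in> ball x0 r")
    case True
    then have yK: "y \<in> K" using r by blast
    have d: "norm (y - x0) < r" using True by (simp add: dist_norm norm_minus_commute)
    have "\<alpha> \<bullet> (y - x0) \<le> norm \<alpha> * norm (y - x0)" by (rule norm_cauchy_schwarz)
    also have "\<dots> \<le> norm \<alpha> * r" using d by (simp add: mult_left_mono)
    finally have "\<alpha> \<bullet> y \<le> \<alpha> \<bullet> x0 + norm \<alpha> * r" by (simp add: inner_diff_right)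
    then show ?thesis using yK True by (simp add: g_fun_def m_def)
  next
    case False then show ?thesis by (simp add: g_fun_def)
  qed
  have fin: "emeasure lborel (ball x0 r) < \<infinity>" by (rule emeasure_bounded_finite) simp
  have "integral\<^sup>L lborel (\<lambda>y. m * indicator (ball x0 r) y) \<le> integral\<^sup>L lborel (g_fun K \<alpha>)"
    by (rule integral_mono) (use fin ig le in auto)
  moreover have "integral\<^sup>L lborel (\<lambda>y. m * indicator (ball x0 r) y) = m * measure lborel (ball x0 r)"
    using fin by simp
  moreover have "measure lborel (ball x0 r) > 0" using r by simp
  moreover have "m * measure lborel (ball x0 r) > 0" using m0 r by simp
  ultimately show ?thesis unfolding c_const_def by linarith
qed

lemma part2_sub:
  fixes f :: "'a::euclidean_space \<Rightarrow> real"
  assumes fF: "f \<in> F_d" and la: "log_1_affine f"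
  shows "\<exists>K \<alpha>. f = (\<lambda>x. g_fun K \<alpha> x / c_const K \<alpha>) \<and> closed K \<and> convex K \<and> interior K \<noteq> {} \<and>
            line_free K \<and> \<alpha> \<in> interior (dual_cone (rec_cone K))"
proof -
  define K where "K = supp f"
  have nn: "\<And>x. 0 \<le> f x" and fi: "integrable lborel f" and f1: "integral\<^sup>L lborel f = 1"
    and lc: "log_concave f" using fF by (auto simp: F_d_def is_density_def)
  have cl: "closed K" using la by (simp add: log_1_affine_def K_def)
  obtain a b where ab: "\<And>x. x \<in> K \<Longrightarrow> ln (f x) = a \<bullet> x + b" using la by (auto simp: log_1_affine_def K_def)
  have inK: "x \<in> K \<longleftrightarrow> f x \<noteq> 0" for x by (simp add: K_def supp_def)
  have fK: "f x = exp (a \<bullet> x + b)" if "x \<in> K" for x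
  proof -
    have "f x > 0" using nn[of x] that inK by (simp add: less_le)
    then have "exp (ln (f x)) = f x" by simp
    then show ?thesis using ab[OF that] by simp
  qed
  have fnK: "f x = 0" if "x \<notin> K" for x using that inK by simp
  have feq: "f x = exp b * g_fun K (- a) x" for x
    by (cases "x \<in> K") (simp_all add: fK fnK g_fun_def exp_add)
  have cv: "convex K"
    unfolding convex_def
  proof (intro ballI allI impI)
    fix x y and u v :: real assume x: "x \<in> K" and y: "y \<in> K" and uv: "0 \<le> u" "0 \<le> v" "u + v = 1"
    show "u *\<^sub>R x + v *\<^sub>R y \<in> K"
    proof (cases "v = 0 \<or> v = 1")
      case True then show ?thesis using x y uv by auto
    next
      case False
      then have t: "0 < v" "v < 1" using uv by auto
      have u: "u = 1 - v" using uv by simp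
      have "f x powr (1 - v) * f y powr v \<le> f ((1 - v) *\<^sub>R x + v *\<^sub>R y)"
        using lc t by (simp add: log_concave_def)
      moreover have "0 < f x powr (1 - v) * f y powr v"
        using x y inK nn by (simp add: less_le)
      ultimately have "f ((1 - v) *\<^sub>R x + v *\<^sub>R y) \<noteq> 0" by linarith
      then show ?thesis using inK u by simp
    qed
  qed
  have int: "interior K \<noteq> {}"
  proof
    assume "interior K = {}"
    then have "negligible K" using negligible_convex_interior[OF cv] by simp
    then have "K \<in> null_sets lebesgue" using negligible_iff_null_sets by blast
    moreover have "K \<in> sets lborel" using cl by simp
    ultimately have "K \<in> null_sets lborel" using null_sets_completion_iff by blast
    then have "AE x in lborel. x \<notin> K" by (rule AE_not_in)
    then have "AE x in lborel. f x = 0" by eventually_elim (rule fnK)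
    then have "integral\<^sup>L lborel f = 0" by (rule integral_eq_zero_AE)
    then show False using f1 by simp
  qed
  have geq: "g_fun K (- a) = (\<lambda>x. exp (- b) * f x)"
    by (rule ext) (simp add: feq exp_minus)
  have gi: "integrable lborel (g_fun K (- a))" unfolding geq using fi by simp
  then have lf: "line_free K" and ai: "- a \<in> interior (dual_cone (rec_cone K))"
    using part1[OF cl cv int] by auto
  have c: "c_const K (- a) = exp (- b)"
    unfolding c_const_def geq using f1 by simp
  have ff: "f = (\<lambda>x. g_fun K (- a) x / c_const K (- a))"
    by (rule ext) (simp add: c feq exp_minus field_simps)
  show ?thesis
    by (rule exI[of _ K], rule exI[of _ "- a"]) (intro conjI ff cl cv int lf ai)
qed

lemma part2_sup:
  fixes K :: "'a::euclidean_space set"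
  assumes cl: "closed K" and cv: "convex K" and int: "interior K \<noteq> {}"
    and lf: "line_free K" and ai: "\<alpha> \<in> interior (dual_cone (rec_cone K))"
  defines "f \<equiv> (\<lambda>x. g_fun K \<alpha> x / c_const K \<alpha>)"
  shows "f \<in> F_d \<and> log_1_affine f"
proof -
  have gi: "integrable lborel (g_fun K \<alpha>)" using part1[OF cl cv int] lf ai by simp
  define c where "c = c_const K \<alpha>"
  have c: "c > 0" unfolding c_def by (rule c_pos[OF cl int gi])
  define h where "h x = - (\<alpha> \<bullet> x) - ln c" for x
  have fK: "f x = exp (h x)" if "x \<in> K" for x
    using that c by (simp add: f_def c_def[symmetric] g_fun_def h_def exp_diff)
  have fnK: "f x = 0" if "x \<notin> K" for x
    using that by (simp add: f_def g_fun_def)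
  have nn: "0 \<le> f x" for x by (cases "x \<in> K") (simp_all add: fK fnK)
  have fi: "integrable lborel f" unfolding f_def using gi by simp
  have f1: "integral\<^sup>L lborel f = 1" unfolding f_def using c by (simp add: c_def c_const_def)
  have lc: "log_concave f"
    unfolding log_concave_def
  proof (intro conjI allI impI nn)
    fix x y and t :: real assume t: "0 < t \<and> t < 1"
    show "f x powr (1 - t) * f y powr t \<le> f ((1 - t) *\<^sub>R x + t *\<^sub>R y)"
    proof (cases "x \<in> K \<and> y \<in> K")
      case False
      then have "f x powr (1 - t) * f y powr t = 0" using fnK by auto
      then show ?thesis using nn[of "(1 - t) *\<^sub>R x + t *\<^sub>R y"] by linarith
    next
      case True
      have z: "(1 - t) *\<^sub>R x + t *\<^sub>R y \<in> K" using True t convexD[OF cv, of x y "1 - t" t] by simp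
      have "f x powr (1 - t) * f y powr t = exp ((1 - t) * h x) * exp (t * h y)"
        using True by (simp add: fK powr_def)
      also have "\<dots> = exp (h ((1 - t) *\<^sub>R x + t *\<^sub>R y))"
        by (simp add: h_def exp_add[symmetric] inner_add_right algebra_simps)
      also have "\<dots> = f ((1 - t) *\<^sub>R x + t *\<^sub>R y)" using fK[OF z] by simp
      finally show ?thesis by simp
    qed
  qed
  have usc: "usc f"
    unfolding usc_def
  proof
    fix s :: real
    show "open {x. f x < s}"
    proof (cases "s \<le> 0")
      case True
      then have "{x. f x < s} = {}" using nn by (auto simp: not_less intro: order_trans)
      then show ?thesis by simp
    next
      case False
      have "{x. f x < s} = - K \<union> {x. exp (h x) < s}"
      proof (intro set_eqI iffI)
        fix x assume "x \<in> {x. f x < s}"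
        then show "x \<in> - K \<union> {x. exp (h x) < s}" using fK by (cases "x \<in> K") auto
      next
        fix x assume "x \<in> - K \<union> {x. exp (h x) < s}"
        then show "x \<in> {x. f x < s}" using fK fnK False by (cases "x \<in> K") auto
      qed
      moreover have "open {x. exp (h x) < s}"
        unfolding h_def by (intro open_Collect_less continuous_intros)
      ultimately show ?thesis using cl by (simp add: open_Un open_Compl)
    qed
  qed
  have supp: "supp f = K"
    using fK fnK by (auto simp: supp_def)
  have la: "log_1_affine f"
    unfolding log_1_affine_def supp
  proof (intro conjI cl exI ballI)
    fix x assume "x \<in> K"
    then show "ln (f x) = (- \<alpha>) \<bullet> x + (- ln c)" by (simp add: fK h_def)
  qed
  have "f \<in> F_d" unfolding F_d_def is_density_def mem_Collect_eq using nn fi f1 lc usc by blast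
  then show ?thesis using la by blast
qed


theorem propositionS15:
  shows "(\<forall>(K::'a::euclidean_space set) \<alpha>. closed K \<and> convex K \<and> interior K \<noteq> {} \<longrightarrow>
            (integrable lborel (g_fun K \<alpha>) \<longleftrightarrow>
               line_free K \<and> \<alpha> \<in> interior (dual_cone (rec_cone K))))
       \<and> {f \<in> (F_d :: ('a \<Rightarrow> real) set). log_1_affine f} =
         {(\<lambda>x. g_fun K \<alpha> x / c_const K \<alpha>) | K \<alpha>.
            closed K \<and> convex K \<and> interior K \<noteq> {} \<and> line_free K \<and>
            \<alpha> \<in> interior (dual_cone (rec_cone K))}"
proof (intro conjI allI impI)
  fix K :: "'a set" and \<alpha> :: 'a
  assume "closed K \<and> convex K \<and> interior K \<noteq> {}"
  then show "integrable lborel (g_fun K \<alpha>) \<longleftrightarrow> line_free K \<and> \<alpha> \<in> interior (dual_cone (rec_cone K))"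
    using part1 by blast
next
  show "{f \<in> (F_d :: ('a \<Rightarrow> real) set). log_1_affine f} =
         {(\<lambda>x. g_fun K \<alpha> x / c_const K \<alpha>) | K \<alpha>.
            closed K \<and> convex K \<and> interior K \<noteq> {} \<and> line_free K \<and>
            \<alpha> \<in> interior (dual_cone (rec_cone K))}"
  proof (intro set_eqI iffI)
    fix f :: "'a \<Rightarrow> real"
    assume "f \<in> {f \<in> F_d. log_1_affine f}"
    then have "f \<in> F_d" "log_1_affine f" by auto
    from part2_sub[OF this] obtain K \<alpha> where
      "f = (\<lambda>x. g_fun K \<alpha> x / c_const K \<alpha>)" "closed K" "convex K" "interior K \<noteq> {}"
      "line_free K" "\<alpha> \<in> interior (dual_cone (rec_cone K))" by blast
    then show "f \<in> {(\<lambda>x. g_fun K \<alpha> x / c_const K \<alpha>) | K \<alpha>.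
            closed K \<and> convex K \<and> interior K \<noteq> {} \<and> line_free K \<and>
            \<alpha> \<in> interior (dual_cone (rec_cone K))}" by blast
  next
    fix f :: "'a \<Rightarrow> real"
    assume "f \<in> {(\<lambda>x. g_fun K \<alpha> x / c_const K \<alpha>) | K \<alpha>.
            closed K \<and> convex K \<and> interior K \<noteq> {} \<and> line_free K \<and>
            \<alpha> \<in> interior (dual_cone (rec_cone K))}"
    then obtain K \<alpha> where f: "f = (\<lambda>x. g_fun K \<alpha> x / c_const K \<alpha>)" and
      h: "closed K" "convex K" "interior K \<noteq> {}" "line_free K" "\<alpha> \<in> interior (dual_cone (rec_cone K))"
      by blast
    from part2_sup[OF h] f show "f \<in> {f \<in> F_d. log_1_affine f}" by simp
  qed
qed

end
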